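(* Let $P$ be a hereditary property, let $(G,f)\in\mathcal C$ with $P(G,f)$, and let $W\subseteq V(G)$ be finite. Then there exists a finite $f$-factor $F$ of $G$ such that $P(G-F,\,f-d_F)$ holds, $d_F(x)=f(x)$ for every $x\in W$ with $f(x)<\aleph_0$, and $d_F(x)>0$ for every $x\in W$ with $f(x)\ge\aleph_0$.
   Context: A graph is $G=(V,E)$ with $V$ a nonempty set and $E\subseteq\{e\subseteq V:|e|=2\}$. For $F\subseteq E$ and $x\in V$, $d_F(x)$ is the cardinal $|\{e\in F:x\in e\}|$. For a function $f:V\to$ Cardinals, an $f$-factor of $G$ is a set $F\subseteq E$ with $d_F(x)\le f(x)$ for all $x\in V$; it is perfect if $d_F(x)=f(x)$ for all $x\in V$. $\mathcal C$ is the class of all pairs $(G,f)$ with $G=(V,E)$ a graph, $f:V\to$ Cardinals, and $f(x)\le d_E(x)$ for all $x\in V$. A property $P$ is a class of pairs; $P(G,f)$ means that $(G,f)\in\mathcal C$ and $(G,f)$ has property $P$. For $H\subseteq E$, $G-H=(V,E\setminus H)$; for $x,y\in V$, $G-\{x,y\}$ denotes $(V,E\setminus\{\{x,y\}\})$ (removal of the single edge $\{x,y\}$). For $x,y\in V$, $f_{x,y}(v)=f(v)-1$ if $v\in\{x,y\}$ and $1\le f(v)<\aleph_0$, and $f_{x,y}(v)=f(v)$ otherwise. $P$ is hereditary if for every $(G,f)$ with $P(G,f)$ and every $x\in V(G)$ with $f(x)>0$ there is $y\in V(G)$ with $f(y)>0$, $\{x,y\}\in E(G)$ and $P(G-\{x,y\},f_{x,y})$.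 For a finite $F\subseteq E$ with $d_F\le f$, $f-d_F$ is the function $x\mapsto f(x)-d_F(x)$ if $f(x)<\aleph_0$ and $x\mapsto f(x)$ if $f(x)\ge\aleph_0$. *)

theory Defs
  imports Main
begin

text \<open>Cardinal values. A value is either a finite cardinal (a natural number) or an
infinite cardinal, represented as the cardinality of an infinite set of type 'c.\<close>
datatype 'c cardv = Fin nat | Inf "'c set"

definition valid_cardv :: "'c cardv \<Rightarrow> bool" where
  "valid_cardv c = (case c of Fin n \<Rightarrow> True | Inf S \<Rightarrow> infinite S)"

definition is_fin :: "'c cardv \<Rightarrow> bool" where
  "is_fin c = (case c of Fin n \<Rightarrow> True | Inf S \<Rightarrow> False)"

definition pos :: "'c cardv \<Rightarrow> bool" where
  "pos c = (case c of Fin n \<Rightarrow> 0 < n | Inf S \<Rightarrow> True)"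

definition cv_le_set :: "'c cardv \<Rightarrow> 'b set \<Rightarrow> bool" where
  "cv_le_set c A = (case c of Fin n \<Rightarrow> (infinite A \<or> n \<le> card A)
                   | Inf S \<Rightarrow> (card_of S, card_of A) \<in> ordLeq)"

definition set_le_cv :: "'b set \<Rightarrow> 'c cardv \<Rightarrow> bool" where
  "set_le_cv A c = (case c of Fin n \<Rightarrow> (finite A \<and> card A \<le> n)
                   | Inf S \<Rightarrow> (card_of A, card_of S) \<in> ordLeq)"

definition set_eq_cv :: "'b set \<Rightarrow> 'c cardv \<Rightarrow> bool" where
  "set_eq_cv A c = (case c of Fin n \<Rightarrow> (finite A \<and> card A = n)
                   | Inf S \<Rightarrow> (card_of A, card_of S) \<in> ordIso)"

type_synonym 'a graph = "'a set \<times> 'a set set"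

definition graph :: "'a graph \<Rightarrow> bool" where
  "graph G = (fst G \<noteq> {} \<and> snd G \<subseteq> {e. e \<subseteq> fst G \<and> card e = 2})"

text \<open>The set of edges of F at x; d_F(x) is its cardinality.\<close>
definition inc :: "'a set set \<Rightarrow> 'a \<Rightarrow> 'a set set" where
  "inc F x = {e \<in> F. x \<in> e}"

definition inC :: "'a graph \<Rightarrow> ('a \<Rightarrow> 'c cardv) \<Rightarrow> bool" where
  "inC G f = (graph G \<and> (\<forall>x\<in>fst G. valid_cardv (f x) \<and> cv_le_set (f x) (inc (snd G) x)))"

definition holds :: "('a graph \<Rightarrow> ('a \<Rightarrow> 'c cardv) \<Rightarrow> bool) \<Rightarrow> 'a graph \<Rightarrow> ('a \<Rightarrow> 'c cardv) \<Rightarrow> bool" where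
  "holds P G f = (inC G f \<and> P G f)"

definition remove_edges :: "'a graph \<Rightarrow> 'a set set \<Rightarrow> 'a graph" where
  "remove_edges G H = (fst G, snd G - H)"

definition fxy :: "('a \<Rightarrow> 'c cardv) \<Rightarrow> 'a \<Rightarrow> 'a \<Rightarrow> ('a \<Rightarrow> 'c cardv)" where
  "fxy f x y = (\<lambda>v. if v \<in> {x, y} then (case f v of Fin n \<Rightarrow> Fin (n - 1) | Inf S \<Rightarrow> Inf S) else f v)"

definition hereditary :: "('a graph \<Rightarrow> ('a \<Rightarrow> 'c cardv) \<Rightarrow> bool) \<Rightarrow> bool" where
  "hereditary P = (\<forall>G f. holds P G f \<longrightarrow>
     (\<forall>x\<in>fst G. pos (f x) \<longrightarrow>
       (\<exists>y\<in>fst G. pos (f y) \<and> {x, y} \<in> snd G \<and>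
          holds P (remove_edges G {{x, y}}) (fxy f x y))))"

definition ffactor :: "'a graph \<Rightarrow> ('a \<Rightarrow> 'c cardv) \<Rightarrow> 'a set set \<Rightarrow> bool" where
  "ffactor G f F = (F \<subseteq> snd G \<and> (\<forall>x\<in>fst G. set_le_cv (inc F x) (f x)))"

definition fminus :: "('a \<Rightarrow> 'c cardv) \<Rightarrow> 'a set set \<Rightarrow> ('a \<Rightarrow> 'c cardv)" where
  "fminus f F = (\<lambda>v. case f v of Fin n \<Rightarrow> Fin (n - card (inc F v)) | Inf S \<Rightarrow> Inf S)"

end

theory Submission
  imports Defs
begin

lemma inc_insert:
  "inc (insert e F) v = (if v \<in> e then insert e (inc F v) else inc F v)"
  unfolding inc_def by auto

lemma fminus_insert:
  assumes "finite F" "{x,y} \<notin> F"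
  shows "fminus f (insert {x,y} F) = fxy (fminus f F) x y"
proof
  fix v
  have fin: "finite (inc F v)" using assms(1) unfolding inc_def by auto
  have nin: "{x,y} \<notin> inc F v" using assms(2) unfolding inc_def by auto
  show "fminus f (insert {x,y} F) v = fxy (fminus f F) x y v"
  proof (cases "v \<in> {x,y}")
    case True
    then have "inc (insert {x,y} F) v = insert {x,y} (inc F v)" by (simp add: inc_insert)
    then have c: "card (inc (insert {x,y} F) v) = Suc (card (inc F v))"
      using fin nin by simp
    show ?thesis using True c unfolding fminus_def fxy_def
      by (cases "f v") auto
  next
    case False
    then have "inc (insert {x,y} F) v = inc F v" by (simp add: inc_insert)
    then show ?thesis using False unfolding fminus_def fxy_def
      by (cases "f v") auto
  qed
qed

lemma remove_edges_insert:
  "remove_edges G (insert e F) = remove_edges (remove_edges G F) {e}"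
  unfolding remove_edges_def by auto

lemma fminus_empty: "fminus f {} = f"
proof
  fix v show "fminus f {} v = f v" unfolding fminus_def inc_def by (cases "f v") auto
qed

lemma remove_edges_empty: "remove_edges G {} = G"
  unfolding remove_edges_def by auto

definition need :: "('a \<Rightarrow> 'c cardv) \<Rightarrow> 'a set set \<Rightarrow> 'a \<Rightarrow> nat" where
  "need f F x = (case f x of Fin n \<Rightarrow> n - card (inc F x) | Inf S \<Rightarrow> (if inc F x = {} then 1 else 0))"

lemma need_mono:
  assumes "finite (insert e F)"
  shows "need f (insert e F) x \<le> need f F x"
proof -
  have sub: "inc F x \<subseteq> inc (insert e F) x" unfolding inc_def by auto
  have "finite (inc (insert e F) x)" using assms unfolding inc_def by auto
  then have "card (inc F x) \<le> card (inc (insert e F) x)" using sub card_mono by blast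
  then show ?thesis using sub unfolding need_def by (cases "f x") auto
qed

lemma need_dec:
  assumes "finite F" "e \<notin> F" "x \<in> e" "need f F x > 0"
  shows "need f (insert e F) x < need f F x"
proof -
  have fin: "finite (inc F x)" using assms(1) unfolding inc_def by auto
  have "inc (insert e F) x = insert e (inc F x)" using assms(3) by (simp add: inc_insert)
  moreover have "e \<notin> inc F x" using assms(2) unfolding inc_def by auto
  ultimately have c: "card (inc (insert e F) x) = Suc (card (inc F x))" 
    and ne: "inc (insert e F) x \<noteq> {}" using fin by auto
  show ?thesis using assms(4) c ne unfolding need_def by (cases "f x") auto
qed

theorem mainTheorem1:
  fixes P :: "'a graph \<Rightarrow> ('a \<Rightarrow> 'c cardv) \<Rightarrow> bool"
    and G :: "'a graph" and f :: "'a \<Rightarrow> 'c cardv" and W :: "'a set"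
  assumes "hereditary P"
    and "holds P G f"
    and "W \<subseteq> fst G" and "finite W"
  shows "\<exists>F. finite F \<and> ffactor G f F \<and> holds P (remove_edges G F) (fminus f F)
          \<and> (\<forall>x\<in>W. is_fin (f x) \<longrightarrow> set_eq_cv (inc F x) (f x))
          \<and> (\<forall>x\<in>W. \<not> is_fin (f x) \<longrightarrow> inc F x \<noteq> {})"
proof -
  define V where "V = fst G"
  define E where "E = snd G"
  have two: "\<And>e. e \<in> E \<Longrightarrow> card e = 2" using assms(2) unfolding holds_def inC_def graph_def E_def by auto
  have valid: "\<And>v. v \<in> V \<Longrightarrow> valid_cardv (f v)" using assms(2) unfolding holds_def inC_def V_def by auto
  define inv where "inv F \<longleftrightarrow> finite F \<and> F \<subseteq> E \<and> holds P (remove_edges G F) (fminus f F)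
      \<and> (\<forall>v\<in>V. \<forall>n. f v = Fin n \<longrightarrow> card (inc F v) \<le> n)" for F
  define mu where "mu F = (\<Sum>x\<in>W. need f F x)" for F
  have main: "\<And>F. inv F \<Longrightarrow> mu F = m \<Longrightarrow> \<exists>F'. inv F' \<and> mu F' = 0" for m
  proof (induction m rule: less_induct)
    case (less m)
    show ?case
    proof (cases "m = 0")
      case True then show ?thesis using less by blast
    next
      case False
      then obtain x where xW: "x \<in> W" and nx: "need f F x > 0"
        using less(3) unfolding mu_def by (metis gr0I sum.neutral)
      have xV: "x \<in> V" using xW assms(3) V_def by auto
      have finF: "finite F" and FE: "F \<subseteq> E" and hP: "holds P (remove_edges G F) (fminus f F)"
        and bnd: "\<forall>v\<in>V. \<forall>n. f v = Fin n \<longrightarrow> card (inc F v) \<le> n"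
        using less(2) unfolding inv_def by auto
      have px: "pos (fminus f F x)" using nx unfolding need_def fminus_def pos_def
        by (cases "f x") auto
      obtain y where yV: "y \<in> V" and py: "pos (fminus f F y)"
        and eE: "{x,y} \<in> E - F"
        and hP': "holds P (remove_edges (remove_edges G F) {{x,y}}) (fxy (fminus f F) x y)"
      proof -
        have "\<exists>y\<in>fst (remove_edges G F). pos (fminus f F y) \<and> {x, y} \<in> snd (remove_edges G F) \<and>
          holds P (remove_edges (remove_edges G F) {{x, y}}) (fxy (fminus f F) x y)"
        proof -
          have xR: "x \<in> fst (remove_edges G F)" using xV by (simp add: remove_edges_def V_def)
          show ?thesis using assms(1)[unfolded hereditary_def, rule_format, OF hP xR px] .
        qed
        then show ?thesis using that by (auto simp: remove_edges_def V_def E_def)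
      qed
      define F' where "F' = insert {x,y} F"
      have finF': "finite F'" using finF F'_def by auto
      have hP'': "holds P (remove_edges G F') (fminus f F')"
      proof -
        have "fminus f F' = fxy (fminus f F) x y" using eE finF by (simp add: F'_def fminus_insert)
        moreover have "remove_edges G F' = remove_edges (remove_edges G F) {{x,y}}"
          unfolding F'_def by (rule remove_edges_insert)
        ultimately show ?thesis using hP' by simp
      qed
      have xy: "x \<noteq> y" using two[of "{x,y}"] eE by auto
      have bnd': "\<forall>v\<in>V. \<forall>n. f v = Fin n \<longrightarrow> card (inc F' v) \<le> n"
      proof (intro ballI allI impI)
        fix v n assume vV: "v \<in> V" and fv: "f v = Fin n"
        have fin: "finite (inc F v)" using finF unfolding inc_def by auto
        have nin: "{x,y} \<notin> inc F v" using eE unfolding inc_def by auto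
        show "card (inc F' v) \<le> n"
        proof (cases "v \<in> {x,y}")
          case True
          then have "inc F' v = insert {x,y} (inc F v)" by (simp add: inc_insert F'_def)
          then have c: "card (inc F' v) = Suc (card (inc F v))" using fin nin by simp
          have "pos (fminus f F v)" using True px py by auto
          then have "card (inc F v) < n" using fv unfolding pos_def fminus_def by auto
          then show ?thesis using c by simp
        next
          case False
          then have "inc F' v = inc F v" by (simp add: inc_insert F'_def)
          then show ?thesis using bnd vV fv by auto
        qed
      qed
      have invF': "inv F'" unfolding inv_def using finF' FE eE hP'' bnd' F'_def by auto
      have "mu F' < mu F" unfolding mu_def
      proof (rule sum_strict_mono_ex1[OF assms(4)])
        show "\<forall>z\<in>W. need f F' z \<le> need f F z" using need_mono finF' F'_def by metis
        show "\<exists>a\<in>W. need f F' a < need f F a"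
          using xW need_dec[OF finF _ _ nx, of "{x,y}"] eE F'_def by auto
      qed
      then show ?thesis using less(1) invF' less(3) by blast
    qed
  qed
  have "inv {}" unfolding inv_def using assms(2)
    by (simp add: fminus_empty remove_edges_empty inc_def)
  then obtain F where iF: "inv F" and m0: "mu F = 0" using main by blast
  have finF: "finite F" and FE: "F \<subseteq> E" and hP: "holds P (remove_edges G F) (fminus f F)"
    and bnd: "\<forall>v\<in>V. \<forall>n. f v = Fin n \<longrightarrow> card (inc F v) \<le> n"
    using iF unfolding inv_def by auto
  have finc: "\<And>v. finite (inc F v)" using finF unfolding inc_def by auto
  have n0: "\<And>x. x \<in> W \<Longrightarrow> need f F x = 0" using m0 assms(4) unfolding mu_def by simp
  have ff: "ffactor G f F" unfolding ffactor_def
  proof (intro conjI ballI)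
    show "F \<subseteq> snd G" using FE E_def by simp
    fix v assume vV: "v \<in> fst G"
    show "set_le_cv (inc F v) (f v)"
    proof (cases "f v")
      case (Fin n) then show ?thesis using bnd vV finc V_def unfolding set_le_cv_def by auto
    next
      case (Inf S)
      then have "infinite S" using valid[of v] vV V_def unfolding valid_cardv_def by auto
      then show ?thesis using Inf finc[of v] unfolding set_le_cv_def
        using ordLess_imp_ordLeq[OF finite_ordLess_infinite[OF card_of_Well_order card_of_Well_order]]
        by (simp add: Field_card_of)
    qed
  qed
  have w1: "\<forall>x\<in>W. is_fin (f x) \<longrightarrow> set_eq_cv (inc F x) (f x)"
  proof (intro ballI impI)
    fix x assume xW: "x \<in> W" and "is_fin (f x)"
    then obtain n where fx: "f x = Fin n" unfolding is_fin_def by (cases "f x") auto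
    have "x \<in> V" using xW assms(3) V_def by auto
    then show "set_eq_cv (inc F x) (f x)" using n0[OF xW] bnd fx finc
      unfolding set_eq_cv_def need_def by force
  qed
  have w2: "\<forall>x\<in>W. \<not> is_fin (f x) \<longrightarrow> inc F x \<noteq> {}"
  proof (intro ballI impI)
    fix x assume xW: "x \<in> W" and "\<not> is_fin (f x)"
    then obtain S where fx: "f x = Inf S" unfolding is_fin_def by (cases "f x") auto
    then show "inc F x \<noteq> {}" using n0[OF xW] unfolding need_def by (auto split: if_splits)
  qed
  show ?thesis using finF ff hP w1 w2 by blast
qed

end
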